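(* For $n\ge 2$, let $\mathscr{C}_n=\langle Q,\{a,b\},\delta\rangle$ be the Černý automaton with $Q=\{0,1,\dots,n-1\}$, where $\delta(i,b)=i+1$ for $0\le i\le n-2$, $\delta(n-1,b)=0$, $\delta(i,a)=i$ for $0\le i\le n-2$, and $\delta(n-1,a)=0$. Then $sc(Syn(\mathscr{C}_n))=2^n-n$.
   Context: For a DFA $\mathscr{A}=\langle Q,\Sigma,\delta\rangle$ (total transition function, extended to words), $Syn(\mathscr{A})$ is the set of words $w\in\Sigma^*$ such that $\delta(q,w)=\delta(q',w)$ for all $q,q'\in Q$. The state complexity $sc(L)$ of a regular language $L$ is the number of states of the minimal (complete) DFA recognizing $L$. *)

theory Defs
  imports Main
begin

definition delta_star :: "('s \<Rightarrow> 'a \<Rightarrow> 's) \<Rightarrow> 's \<Rightarrow> 'a list \<Rightarrow> 's" where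
  "delta_star \<delta> q w = foldl \<delta> q w"

definition Syn :: "'s set \<Rightarrow> ('s \<Rightarrow> 'a \<Rightarrow> 's) \<Rightarrow> 'a list set" where
  "Syn Q \<delta> = {w. \<forall>q\<in>Q. \<forall>q'\<in>Q. delta_star \<delta> q w = delta_star \<delta> q' w}"

text \<open>A complete DFA with k states, states encoded as {0..<k} (any finite state set
  can be renamed to this one), recognizing the language L over the alphabet UNIV.\<close>
definition dfa_recognizes :: "nat \<Rightarrow> (nat \<Rightarrow> 'a \<Rightarrow> nat) \<Rightarrow> nat \<Rightarrow> nat set \<Rightarrow> 'a list set \<Rightarrow> bool" where
  "dfa_recognizes k \<delta> q0 F L \<longleftrightarrow>
     q0 < k \<and> F \<subseteq> {0..<k} \<and> (\<forall>q<k. \<forall>x. \<delta> q x < k) \<and>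
     L = {w. delta_star \<delta> q0 w \<in> F}"

definition sc :: "'a list set \<Rightarrow> nat" where
  "sc L = (LEAST k. \<exists>\<delta> q0 F. dfa_recognizes k \<delta> q0 F L)"

datatype letter = a | b

fun cerny :: "nat \<Rightarrow> nat \<Rightarrow> letter \<Rightarrow> nat" where
  "cerny n i b = (if i = n - 1 then 0 else i + 1)"
| "cerny n i a = (if i = n - 1 then 0 else i)"

end

theory Submission imports Defs begin

abbreviation ds :: "nat \<Rightarrow> nat \<Rightarrow> letter list \<Rightarrow> nat" where
  "ds n q w \<equiv> delta_star (cerny n) q w"

lemma ds_Nil[simp]: "delta_star d q [] = q" by (simp add: delta_star_def)
lemma ds_Cons[simp]: "delta_star d q (x#w) = delta_star d (d q x) w" by (simp add: delta_star_def)
lemma ds_append[simp]: "delta_star d q (u@v) = delta_star d (delta_star d q u) v"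
  by (simp add: delta_star_def)

lemma cerny_lt: "q < n \<Longrightarrow> cerny n q x < n"
  by (cases x) auto

lemma ds_lt: "q < n \<Longrightarrow> ds n q w < n"
  by (induction w arbitrary: q) (auto simp: cerny_lt)

lemma ds_rep_b: "q + j \<le> n - 1 \<Longrightarrow> ds n q (replicate j b) = q + j"
  by (induction j arbitrary: q) auto

lemma rep_split: "i + Suc j = n \<Longrightarrow> replicate n x = replicate i x @ x # replicate j x"
proof -
  assume "i + Suc j = n"
  then have "replicate n x = replicate (i + Suc j) x" by simp
  then show ?thesis by (simp only: replicate_add replicate_Suc)
qed

lemma ds_rep_n: assumes "q < n" shows "ds n q (replicate n b) = q"
proof -
  have e: "replicate n b = replicate (n-1-q) b @ b # replicate q b"
    using assms by (intro rep_split) simp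
  show ?thesis using assms unfolding e by (simp add: ds_rep_b)
qed

lemma ds_rep_nj: "q < n \<Longrightarrow> ds n q (replicate (n*j) b) = q"
  by (induction j) (auto simp: replicate_add ds_rep_n)

lemma cerny_b_inj: "p < n \<Longrightarrow> q < n \<Longrightarrow> cerny n p b = cerny n q b \<Longrightarrow> p = q"
  by (auto split: if_splits)

lemma ds_rep_inj: "p < n \<Longrightarrow> q < n \<Longrightarrow> ds n p (replicate j b) = ds n q (replicate j b) \<Longrightarrow> p = q"
proof (induction j arbitrary: p q)
  case (Suc j)
  then have "cerny n p b = cerny n q b" using cerny_lt by (metis ds_Cons replicate_Suc)
  then show ?case using Suc cerny_b_inj by blast
qed simp

definition W :: "nat \<Rightarrow> letter list" where "W n = replicate (n-1) b @ [a]"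

lemma ds_W: assumes "q < n" shows "ds n q (W n) = q - 1"
proof (cases "q = 0")
  case True
  then show ?thesis using assms by (simp add: W_def ds_rep_b)
next
  case False
  have e: "replicate (n-1) b = replicate (n-1-q) b @ b # replicate (q-1) b"
    using assms False by (intro rep_split) simp
  show ?thesis using assms False unfolding W_def e by (simp add: ds_rep_b)
qed

lemma ds_Wk: "q < n \<Longrightarrow> ds n q (concat (replicate k (W n))) = q - k"
  by (induction k arbitrary: q) (auto simp: ds_W)

definition z :: "nat \<Rightarrow> nat \<Rightarrow> letter list" where
  "z n x = replicate (n-1-x) b @ concat (replicate (n-2) (W n))"

lemma ds_z: assumes "2 \<le> n" "q < n" "x < n" shows "ds n q (z n x) = (if q = x then 1 else 0)"
proof -
  have hx: "ds n x (replicate (n-1-x) b) = n - 1" using assms by (simp add: ds_rep_b)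
  show ?thesis
  proof (cases "q = x")
    case True then show ?thesis using assms hx by (simp add: z_def ds_Wk)
  next
    case False
    have "ds n q (replicate (n-1-x) b) \<noteq> n - 1" using hx ds_rep_inj assms False by metis
    moreover have "ds n q (replicate (n-1-x) b) < n" using ds_lt assms by blast
    ultimately show ?thesis using False assms by (simp add: z_def ds_Wk)
  qed
qed


definition img :: "nat \<Rightarrow> nat set \<Rightarrow> letter list \<Rightarrow> nat set" where
  "img n S w = (\<lambda>q. ds n q w) ` S"

lemma img_img: "img n (img n S u) v = img n S (u@v)"
  by (simp add: img_def image_image)

lemma img_Nil[simp]: "img n S [] = S" by (simp add: img_def)

lemma img_sub: "S \<subseteq> {0..<n} \<Longrightarrow> img n S w \<subseteq> {0..<n}"
  using ds_lt by (auto simp: img_def)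

definition Reach :: "nat \<Rightarrow> nat set \<Rightarrow> bool" where
  "Reach n S \<longleftrightarrow> (\<exists>w. img n {0..<n} w = S)"

lemma Reach_img: "Reach n S \<Longrightarrow> Reach n (img n S v)"
  unfolding Reach_def by (metis img_img)

lemma reach_all: "S \<subseteq> {0..<n} \<Longrightarrow> S \<noteq> {} \<Longrightarrow> Reach n S"
proof (induction "n - card S" arbitrary: S rule: less_induct)
  case less
  show ?case
  proof (cases "S = {0..<n}")
    case True then show ?thesis unfolding Reach_def by (rule_tac x="[]" in exI) simp
  next
    case False
    then obtain c where c: "c < n" "c \<notin> S" using less.prems by auto
    define j where "j = n - 1 - c"
    define S' where "S' = img n S (replicate j b)"
    have hc: "ds n c (replicate j b) = n - 1" using c by (simp add: j_def ds_rep_b)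
    have injS: "inj_on (\<lambda>q. ds n q (replicate j b)) S"
      unfolding inj_on_def using ds_rep_inj less.prems(1) by (meson atLeastLessThan_iff subsetD)
    have cS': "card S' = card S" unfolding S'_def img_def using injS card_image by blast
    have nS': "n - 1 \<notin> S'"
    proof
      assume "n - 1 \<in> S'"
      then obtain q where "q \<in> S" "ds n q (replicate j b) = n - 1" unfolding S'_def img_def by auto
      then have "q = c" using hc ds_rep_inj c less.prems(1) by (metis atLeastLessThan_iff subsetD)
      then show False using c \<open>q \<in> S\<close> by simp
    qed
    have S'sub: "S' \<subseteq> {0..<n}" unfolding S'_def using img_sub less.prems(1) by blast
    have S'ne: "S' \<noteq> {}" unfolding S'_def img_def using less.prems(2) by simp
    have fS': "finite S'" using S'sub finite_subset by blast
    define m where "m = Min S'"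
    have mle: "\<And>q. q \<in> S' \<Longrightarrow> m \<le> q" unfolding m_def using fS' by simp
    have mS': "m \<in> S'" unfolding m_def using fS' S'ne by simp
    define S'' where "S'' = (\<lambda>q. q - m) ` S'"
    have injm: "inj_on (\<lambda>q. q - m) S'" using mle by (intro inj_onI) (metis le_add_diff_inverse2)
    have cS'': "card S'' = card S" unfolding S''_def using card_image injm cS' by metis
    have z0: "0 \<in> S''" unfolding S''_def using mS' by force
    have S''le: "\<And>q. q \<in> S'' \<Longrightarrow> q < n - 1"
    proof -
      fix q assume "q \<in> S''"
      then obtain p where "p \<in> S'" "q = p - m" unfolding S''_def by auto
      moreover have "p < n" "p \<noteq> n - 1" using \<open>p \<in> S'\<close> S'sub nS' by auto
      ultimately show "q < n - 1" by linarith
    qed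
    define T where "T = insert (n - 1) S''"
    have fS: "finite S" using less.prems(1) finite_subset by blast
    have "S \<subset> {0..<n}" using False less.prems(1) by blast
    then have "card S < card {0..<n}" by (rule psubset_card_mono[OF finite_atLeastLessThan])
    then have "card S < n" by simp
    have nT: "n - 1 \<notin> S''" using S''le by blast
    have fS'': "finite S''" unfolding S''_def using fS' by simp
    have cT: "card T = card S + 1"
      unfolding T_def using card_insert_disjoint[OF fS'' nT] cS'' by simp
    have Tsub: "T \<subseteq> {0..<n}" unfolding T_def using S''le \<open>card S < n\<close> by (auto dest!: S''le)
    have "Reach n T"
      by (rule less.hyps) (use cT \<open>card S < n\<close> Tsub in \<open>auto simp: T_def\<close>)
    have e1: "img n T [a] = S''"
    proof -
      have hS: "(\<lambda>q. ds n q [a]) ` S'' = (\<lambda>q. q) ` S''"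
        by (rule image_cong[OF refl]) (auto dest: S''le)
      have "img n T [a] = insert 0 S''" unfolding img_def T_def image_insert hS by simp
      then show ?thesis using z0 by auto
    qed
    have e2: "img n S'' (replicate m b) = S'"
    proof -
      have "img n S'' (replicate m b) = (\<lambda>q. ds n (q - m) (replicate m b)) ` S'"
        unfolding img_def S''_def by (simp add: image_image)
      also have "\<dots> = (\<lambda>q. q) ` S'"
      proof (rule image_cong[OF refl])
        fix q assume "q \<in> S'"
        then have q1: "q < n" using S'sub by auto
        have q2: "q - m + m = q" using mle \<open>q \<in> S'\<close> by simp
        have "q - m + m \<le> n - 1" using q1 q2 by simp
        then have "ds n (q - m) (replicate m b) = q - m + m" by (rule ds_rep_b)
        then show "ds n (q - m) (replicate m b) = q" using q2 by simp
      qed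
      finally show ?thesis by simp
    qed
    have e3: "img n S' (replicate (c+1) b) = S"
    proof -
      have "img n S' (replicate (c+1) b) = img n S (replicate n b)"
        proof -
        have "replicate j b @ replicate (c+1) b = replicate n b"
        proof -
          have "j + (c+1) = n" unfolding j_def using c by simp
          then show ?thesis by (metis replicate_add)
        qed
        then show ?thesis unfolding S'_def img_img by simp
      qed
      also have "\<dots> = (\<lambda>q. q) ` S" unfolding img_def
        by (rule image_cong[OF refl]) (use less.prems(1) ds_rep_n in auto)
      finally show ?thesis by simp
    qed
    have "S = img n (img n (img n T [a]) (replicate m b)) (replicate (c+1) b)"
      using e1 e2 e3 by simp
    then show ?thesis using \<open>Reach n T\<close> Reach_img by metis
  qed
qed


definition triv :: "nat set \<Rightarrow> bool" where "triv S \<longleftrightarrow> (\<forall>p\<in>S. \<forall>q\<in>S. p = q)"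

lemma Syn_eq: "Syn {0..<n} (cerny n) = {w. triv (img n {0..<n} w)}"
  unfolding Syn_def triv_def img_def by simp

definition X :: "nat \<Rightarrow> nat set set" where
  "X n = insert {0} {S. S \<subseteq> {0..<n} \<and> 2 \<le> card S}"

lemma triv_card: "S \<subseteq> {0..<n} \<Longrightarrow> triv S \<longleftrightarrow> card S \<le> Suc 0"
proof -
  assume "S \<subseteq> {0..<n}"
  then have "finite S" using finite_subset by blast
  then show ?thesis using card_le_Suc0_iff_eq[of S] by (simp add: triv_def)
qed

lemma ntriv_card: "S \<subseteq> {0..<n} \<Longrightarrow> 2 \<le> card S \<Longrightarrow> \<not> triv S"
  using triv_card[of S n] by simp

lemma card_ntriv: "S \<subseteq> {0..<n} \<Longrightarrow> \<not> triv S \<Longrightarrow> 2 \<le> card S"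
  using triv_card[of S n] by simp

lemma distinguish:
  assumes n: "2 \<le> n" and S: "S \<in> X n" and T: "T \<in> X n" and ST: "S \<noteq> T"
  shows "\<exists>v. triv (img n S v) \<noteq> triv (img n T v)"
proof -
  have key: "\<exists>v. triv (img n A v) \<noteq> triv (img n B v)"
    if A: "A \<subseteq> {0..<n}" "2 \<le> card A" and B: "B \<subseteq> {0..<n}" "B \<noteq> {}" and x: "x \<in> A" "x \<notin> B"
    for A B x
  proof -
    have xn: "x < n" using A x by auto
    have "img n B (z n x) = (\<lambda>q. 0) ` B" unfolding img_def
    proof (rule image_cong[OF refl])
      fix q assume "q \<in> B"
      then have "q < n" "q \<noteq> x" using B x by auto
      then show "ds n q (z n x) = 0" using ds_z[OF n _ xn] by simp
    qed
    also have "\<dots> = {0}" using B(2) by auto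
    finally have tB: "triv (img n B (z n x))" by (simp add: triv_def)
    have "\<exists>p\<in>A. \<exists>q\<in>A. p \<noteq> q" using ntriv_card[OF A] unfolding triv_def by blast
    then obtain y where y: "y \<in> A" "y \<noteq> x" by blast
    have yn: "y < n" using A y by auto
    have "ds n x (z n x) = 1" using ds_z[OF n xn xn] by simp
    then have i1: "1 \<in> img n A (z n x)" unfolding img_def using x by (metis image_eqI)
    have "ds n y (z n x) = 0" using ds_z[OF n yn xn] y by simp
    then have i0: "0 \<in> img n A (z n x)" unfolding img_def using y by (metis image_eqI)
    have "\<not> triv (img n A (z n x))" unfolding triv_def using i0 i1 by (metis zero_neq_one)
    then show ?thesis using tB by blast
  qed
  show ?thesis
  proof (cases "S = {0} \<or> T = {0}")
    case True
    then have "(S = {0} \<and> \<not> triv T) \<or> (T = {0} \<and> \<not> triv S)"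
      using S T ST ntriv_card unfolding X_def by auto
    then show ?thesis by (rule_tac x="[]" in exI) (auto simp: triv_def)
  next
    case False
    then have S1: "S \<subseteq> {0..<n}" "2 \<le> card S" and T1: "T \<subseteq> {0..<n}" "2 \<le> card T"
      using S T unfolding X_def by auto
    have ne: "S \<noteq> {}" "T \<noteq> {}" using S1 T1 by auto
    from ST obtain x where "(x \<in> S \<and> x \<notin> T) \<or> (x \<in> T \<and> x \<notin> S)" by blast
    then show ?thesis using key[OF S1 T1(1) ne(2)] key[OF T1 S1(1) ne(1)] by metis
  qed
qed

lemma ds_lt_k: "(\<forall>q<k. \<forall>x. d q x < k) \<Longrightarrow> q < k \<Longrightarrow> delta_star d q w < k"
  by (induction w arbitrary: q) auto

lemma lower:
  assumes n: "2 \<le> n" and D: "dfa_recognizes k d q0 F (Syn {0..<n} (cerny n))"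
  shows "card (X n) \<le> k"
proof -
  have R: "\<And>S. S \<in> X n \<Longrightarrow> Reach n S"
  proof -
    fix S assume "S \<in> X n"
    then have "S \<subseteq> {0..<n}" "S \<noteq> {}" unfolding X_def using n by auto
    then show "Reach n S" by (rule reach_all)
  qed
  define u where "u S = (SOME w. img n {0..<n} w = S)" for S
  have u: "\<And>S. S \<in> X n \<Longrightarrow> img n {0..<n} (u S) = S"
    unfolding u_def using R unfolding Reach_def by (rule someI_ex)
  define phi where "phi S = delta_star d q0 (u S)" for S
  have L: "\<And>w. (w \<in> Syn {0..<n} (cerny n)) = (delta_star d q0 w \<in> F)"
    using D unfolding dfa_recognizes_def by blast
  have cl: "\<forall>q<k. \<forall>x. d q x < k" "q0 < k" using D unfolding dfa_recognizes_def by auto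
  have inj: "inj_on phi (X n)"
  proof (rule inj_onI, rule ccontr)
    fix S T assume S: "S \<in> X n" and T: "T \<in> X n" and e: "phi S = phi T" and ST: "S \<noteq> T"
    obtain v where v: "triv (img n S v) \<noteq> triv (img n T v)" using distinguish[OF n S T ST] by blast
    have "\<And>A. A \<in> X n \<Longrightarrow> triv (img n A v) = (delta_star d (phi A) v \<in> F)"
    proof -
      fix A assume "A \<in> X n"
      then show "triv (img n A v) = (delta_star d (phi A) v \<in> F)"
      proof -
        have "triv (img n A v) = triv (img n {0..<n} (u A @ v))"
          using u[OF \<open>A \<in> X n\<close>] img_img by metis
        also have "\<dots> = (u A @ v \<in> Syn {0..<n} (cerny n))" unfolding Syn_eq by simp
        also have "\<dots> = (delta_star d q0 (u A @ v) \<in> F)" by (rule L)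
        also have "\<dots> = (delta_star d (phi A) v \<in> F)" unfolding phi_def by simp
        finally show ?thesis .
      qed
    qed
    then show False using v e S T by simp
  qed
  have "phi ` X n \<subseteq> {0..<k}" unfolding phi_def using ds_lt_k cl by auto
  then have "card (phi ` X n) \<le> card {0..<k}" by (intro card_mono) auto
  then show ?thesis using card_image[OF inj] by simp
qed


lemma encode:
  fixes d :: "'s \<Rightarrow> letter \<Rightarrow> 's"
  assumes fin: "finite Y" and cl: "\<And>y x. y \<in> Y \<Longrightarrow> d y x \<in> Y" and y0: "y0 \<in> Y" and FY: "F \<subseteq> Y"
  shows "\<exists>dd q0 F'. dfa_recognizes (card Y) dd q0 F' {w. foldl d y0 w \<in> F}"
proof -
  obtain h where h: "bij_betw h {0..<card Y} Y" using ex_bij_betw_nat_finite fin by blast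
  define g where "g = the_inv_into {0..<card Y} h"
  have g: "bij_betw g Y {0..<card Y}" unfolding g_def using h bij_betw_the_inv_into by blast
  have hg: "\<And>y. y \<in> Y \<Longrightarrow> h (g y) = y" unfolding g_def using h
    by (simp add: bij_betw_def f_the_inv_into_f)
  define dd where "dd i x = g (d (h i) x)" for i x
  have hY: "\<And>i. i < card Y \<Longrightarrow> h i \<in> Y" using h by (auto simp: bij_betw_def)
  have gY: "\<And>y. y \<in> Y \<Longrightarrow> g y < card Y" using g by (auto simp: bij_betw_def)
  have run: "y \<in> Y \<Longrightarrow> delta_star dd (g y) w = g (foldl d y w)" for y w
  proof (induction w arbitrary: y)
    case Nil then show ?case by simp
  next
    case (Cons x w)
    then show ?case using hg cl unfolding dd_def by (simp add: delta_star_def)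
  qed
  have fY: "y \<in> Y \<Longrightarrow> foldl d y w \<in> Y" for y w by (induction w arbitrary: y) (auto simp: cl)
  have ginj: "inj_on g Y" using g bij_betw_def by blast
  have "dfa_recognizes (card Y) dd (g y0) (g ` F) {w. foldl d y0 w \<in> F}"
    unfolding dfa_recognizes_def
  proof (intro conjI allI impI)
    show "g y0 < card Y" using gY y0 by blast
    show "g ` F \<subseteq> {0..<card Y}" using gY FY by auto
    show "\<And>q x. q < card Y \<Longrightarrow> dd q x < card Y" unfolding dd_def using gY hY cl by blast
    show "{w. foldl d y0 w \<in> F} = {w. delta_star dd (g y0) w \<in> g ` F}"
    proof (rule Collect_cong)
      fix w
      show "(foldl d y0 w \<in> F) = (delta_star dd (g y0) w \<in> g ` F)"
        unfolding run[OF y0] using inj_on_image_mem_iff[OF ginj fY[OF y0] FY] by simp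
    qed
  qed
  then show ?thesis by blast
qed

definition canon :: "nat set \<Rightarrow> nat set" where "canon S = (if triv S then {0} else S)"

lemma triv_img: "triv S \<Longrightarrow> triv (f ` S)" by (auto simp: triv_def)

lemma canon_img: "canon (f ` canon S) = canon (f ` S)"
proof (cases "triv S")
  case True
  have "triv (f ` {0})" by (simp add: triv_def)
  then show ?thesis using True triv_img[OF True] by (simp add: canon_def)
next
  case False
  then show ?thesis by (simp add: canon_def)
qed

lemma canon_eq0: "canon A = {0} \<longleftrightarrow> triv A"
proof (cases "triv A")
  case True then show ?thesis by (simp add: canon_def)
next
  case False
  have "triv {0::nat}" by (simp add: triv_def)
  then have "A \<noteq> {0}" using False by blast
  then show ?thesis using False by (simp add: canon_def)
qed

lemma upper:
  assumes n: "2 \<le> n"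
  shows "\<exists>dd q0 F'. dfa_recognizes (card (X n)) dd q0 F' (Syn {0..<n} (cerny n))"
proof -
  define d where "d S x = canon (img n S [x])" for S x
  have cl: "\<And>S x. S \<in> X n \<Longrightarrow> d S x \<in> X n"
  proof -
    fix S x assume "S \<in> X n"
    then have "S \<subseteq> {0..<n}" unfolding X_def using n by auto
    then have sub: "img n S [x] \<subseteq> {0..<n}" using img_sub by blast
    show "d S x \<in> X n"
    proof (cases "triv (img n S [x])")
      case True then show ?thesis unfolding d_def canon_def X_def by simp
    next
      case False
      then have "2 \<le> card (img n S [x])" using card_ntriv[OF sub] by blast
      then show ?thesis using False sub unfolding d_def canon_def X_def by simp
    qed
  qed
  have run: "foldl d (canon S) w = canon (img n S w)" for S w
  proof (induction w arbitrary: S)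
    case Nil then show ?case by simp
  next
    case (Cons x w)
    have "d (canon S) x = canon (img n S [x])" unfolding d_def img_def by (rule canon_img)
    then have "foldl d (canon S) (x # w) = foldl d (canon (img n S [x])) w" by simp
    also have "\<dots> = canon (img n (img n S [x]) w)" by (rule Cons)
    also have "\<dots> = canon (img n S (x#w))" unfolding img_img by simp
    finally show ?case .
  qed
  have "0 \<in> {0..<n}" "1 \<in> {0..<n}" using n by auto
  then have Qn: "\<not> triv {0..<n}" unfolding triv_def by (metis zero_neq_one)
  have Q: "canon {0..<n} = {0..<n}" using Qn canon_def by simp
  have QX: "{0..<n} \<in> X n" using n unfolding X_def by simp
  have fin: "finite (X n)"
  proof -
    have "X n \<subseteq> Pow {0..<n}" using n unfolding X_def by auto
    then show ?thesis using finite_subset by blast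
  qed
  have eq: "{w. foldl d {0..<n} w \<in> {{0}}} = Syn {0..<n} (cerny n)"
    unfolding Syn_eq
  proof (rule Collect_cong)
    fix w
    have "foldl d {0..<n} w = canon (img n {0..<n} w)" using run[of "{0..<n}" w] Q by simp
    then show "(foldl d {0..<n} w \<in> {{0}}) = triv (img n {0..<n} w)" by (simp add: canon_eq0)
  qed
  have "{{0}} \<subseteq> X n" unfolding X_def by simp
  have "\<exists>dd q0 F'. dfa_recognizes (card (X n)) dd q0 F' {w. foldl d {0..<n} w \<in> {{0}}}"
    by (rule encode[where d=d, OF fin cl QX \<open>{{0}} \<subseteq> X n\<close>])
  then show ?thesis unfolding eq .
qed

lemma card_X: assumes n: "2 \<le> n" shows "card (X n) = 2 ^ n - n"
proof -
  define P where "P = {S. S \<subseteq> {0..<n} \<and> 2 \<le> card S}"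
  define P0 where "P0 = {S. S \<subseteq> {0..<n} \<and> card S = 0}"
  define P1 where "P1 = {S. S \<subseteq> {0..<n} \<and> card S = 1}"
  have u: "Pow {0..<n} = P \<union> (P0 \<union> P1)"
  proof (rule set_eqI)
    fix S show "S \<in> Pow {0..<n} \<longleftrightarrow> S \<in> P \<union> (P0 \<union> P1)" unfolding P_def P0_def P1_def by auto
  qed
  have "card P0 = card {0..<n} choose 0" unfolding P0_def by (rule n_subsets) simp
  then have c0: "card P0 = 1" by simp
  have "card P1 = card {0..<n} choose 1" unfolding P1_def by (rule n_subsets) simp
  then have c1: "card P1 = n" by simp
  have sub: "P \<subseteq> Pow {0..<n}" "P0 \<subseteq> Pow {0..<n}" "P1 \<subseteq> Pow {0..<n}"
    unfolding P_def P0_def P1_def by auto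
  have fP: "finite (Pow {0..<n})" by simp
  have fin: "finite P" "finite P0" "finite P1"
    by (rule finite_subset[OF sub(1) fP], rule finite_subset[OF sub(2) fP], rule finite_subset[OF sub(3) fP])
  have d1: "P0 \<inter> P1 = {}" unfolding P0_def P1_def by auto
  have d2: "P \<inter> (P0 \<union> P1) = {}" unfolding P_def P0_def P1_def by auto
  have "card (P0 \<union> P1) = 1 + n" using c0 c1 card_Un_disjoint[OF fin(2,3) d1] by simp
  moreover have "card (Pow {0..<n}) = card P + card (P0 \<union> P1)"
    unfolding u by (rule card_Un_disjoint[OF fin(1) _ d2]) (use fin in simp)
  ultimately have "card P = 2 ^ n - 1 - n" by (simp add: card_Pow)
  moreover have "{0} \<notin> P" unfolding P_def by simp
  ultimately have "card (X n) = Suc (2 ^ n - 1 - n)"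
    unfolding X_def P_def[symmetric] using card_insert_disjoint[OF fin(1)] by simp
  moreover have "n < 2 ^ n" by (rule less_exp)
  ultimately show ?thesis by linarith
qed

theorem proposition2:
  fixes n :: nat
  assumes "n \<ge> 2"
  shows "sc (Syn {0..<n} (cerny n)) = 2 ^ n - n"
  unfolding sc_def
proof (rule Least_equality)
  show "\<exists>\<delta> q0 F. dfa_recognizes (2 ^ n - n) \<delta> q0 F (Syn {0..<n} (cerny n))"
    using upper[OF assms] card_X[OF assms] by simp
  show "2 ^ n - n \<le> k" if "\<exists>\<delta> q0 F. dfa_recognizes k \<delta> q0 F (Syn {0..<n} (cerny n))" for k
  proof -
    from that obtain d q0 F where "dfa_recognizes k d q0 F (Syn {0..<n} (cerny n))" by blast
    then have "card (X n) \<le> k" by (rule lower[OF assms])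
    then show ?thesis using card_X[OF assms] by simp
  qed
qed

end
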